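(* Fix an integer $q\ge 2$. There exist constants $c>0$ and $n_0$ depending only on $q$ such that for all $n \ge n_0$, all positive integers $t \le 10\sqrt{n}$, and all $S \subseteq [q]^n$ with $|S| \ge n^4 H_q(n,t)$, we have \[ \Delta(G[S]) \ge c\,\frac{n^{3/2}}{H_q(n,t)}\,|S|. \]
   Context: $d(x,y)$ is the Hamming distance on $[q]^n$ (number of differing coordinates). $V_q(n,r) = \sum_{i=0}^{r}\binom{n}{i}(q-1)^i$ and $H_q(n,t) = q^n / V_q(n,t)$. $G = G_{q,n,t}$ is the graph with vertex set $[q]^n$ in which two distinct vertices are adjacent iff their Hamming distance is at most $2t$; $G[S]$ is its induced subgraph on $S$, and $\Delta(\cdot)$ denotes maximum degree. *)

theory Defs
  imports "HOL-Analysis.Analysis"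
begin

text \<open>The Hamming cube [q]^n, represented by functions nat => nat that take
values in {0..<q} on coordinates 0..<n and are 0 elsewhere.\<close>
definition cube :: "nat \<Rightarrow> nat \<Rightarrow> (nat \<Rightarrow> nat) set" where
  "cube q n = {x. (\<forall>i<n. x i < q) \<and> (\<forall>i\<ge>n. x i = 0)}"

definition hamming :: "nat \<Rightarrow> (nat \<Rightarrow> nat) \<Rightarrow> (nat \<Rightarrow> nat) \<Rightarrow> nat" where
  "hamming n x y = card {i. i < n \<and> x i \<noteq> y i}"

definition ball_vol :: "nat \<Rightarrow> nat \<Rightarrow> nat \<Rightarrow> nat" where
  "ball_vol q n r = (\<Sum>i=0..r. (n choose i) * (q - 1) ^ i)"

definition hamming_bound :: "nat \<Rightarrow> nat \<Rightarrow> nat \<Rightarrow> real" where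
  "hamming_bound q n t = real q ^ n / real (ball_vol q n t)"

text \<open>Degree of v in the induced subgraph G_{q,n,t}[S]: distinct vertices of S
at Hamming distance at most 2t.\<close>
definition induced_degree :: "nat \<Rightarrow> nat \<Rightarrow> (nat \<Rightarrow> nat) set \<Rightarrow> (nat \<Rightarrow> nat) \<Rightarrow> nat" where
  "induced_degree n t S v = card {u \<in> S. u \<noteq> v \<and> hamming n u v \<le> 2 * t}"

definition max_degree :: "nat \<Rightarrow> nat \<Rightarrow> (nat \<Rightarrow> nat) set \<Rightarrow> nat" where
  "max_degree n t S = (if S = {} then 0 else Max (induced_degree n t S ` S))"

end

theory Submission
  imports Defs
begin

definition hball :: "nat \<Rightarrow> (nat\<Rightarrow>nat) \<Rightarrow> nat set \<Rightarrow> nat \<Rightarrow> (nat\<Rightarrow>nat) set" where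
 "hball q x A r = {y. (\<forall>i\<in>A. y i < q) \<and> (\<forall>i. i\<notin>A \<longrightarrow> y i = x i) \<and> card {i\<in>A. y i \<noteq> x i} \<le> r}"

lemma group_card_sum:
  assumes "finite A"
  shows "(\<Sum>D\<in>{D. D\<subseteq>A \<and> card D \<le> r}. f (card D)) = (\<Sum>i=0..r. (card A choose i) * (f i :: nat))"
proof -
  have fin: "finite {D. D\<subseteq>A \<and> card D \<le> r}" using assms by auto
  have "(\<Sum>D\<in>{D. D\<subseteq>A \<and> card D \<le> r}. f (card D)) =
    (\<Sum>i=0..r. \<Sum>D\<in>{D \<in> {D. D\<subseteq>A \<and> card D \<le> r}. card D = i}. f (card D))"
    by (rule sum.group[symmetric, OF fin]) auto
  also have "\<dots> = (\<Sum>i=0..r. (card A choose i) * f i)"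
  proof (rule sum.cong[OF refl])
    fix i assume "i \<in> {0..r}"
    then have e: "{D \<in> {D. D\<subseteq>A \<and> card D \<le> r}. card D = i} = {D. D\<subseteq>A \<and> card D = i}" by auto
    show "(\<Sum>D\<in>{D \<in> {D. D\<subseteq>A \<and> card D \<le> r}. card D = i}. f (card D)) = (card A choose i) * f i"
      unfolding e using n_subsets[OF assms, of i] by simp
  qed
  finally show ?thesis .
qed

lemma hball_card:
  assumes fin: "finite A" and xq: "\<forall>i\<in>A. x i < q"
  shows "card (hball q x A r) = ball_vol q (card A) r"
proof -
  define P where "P = (SIGMA D:{D. D\<subseteq>A \<and> card D \<le> r}. PiE D (\<lambda>i. {..<q} - {x i}))"
  define \<phi> where "\<phi> = (\<lambda>(D::nat set,h::nat\<Rightarrow>nat). (\<lambda>i. if i\<in>D then h i else x i))"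
  have key: "\<And>D h. (D,h) \<in> P \<Longrightarrow> {i. \<phi> (D,h) i \<noteq> x i} = D"
    unfolding P_def \<phi>_def by (auto simp: PiE_iff)
  have inj: "inj_on \<phi> P"
  proof (rule inj_onI)
    fix a b assume a: "a \<in> P" and b: "b \<in> P" and e: "\<phi> a = \<phi> b"
    obtain D h where ad: "a = (D,h)" by (cases a)
    obtain D' h' where bd: "b = (D',h')" by (cases b)
    have DD: "D = D'" using key[of D h] key[of D' h'] a b e ad bd by metis
    have "h = h'"
    proof
      fix i show "h i = h' i"
      proof (cases "i \<in> D")
        case True have "\<phi> a i = \<phi> b i" using e by simp
        then show ?thesis using True ad bd DD unfolding \<phi>_def by auto
      next
        case False then show ?thesis using a b ad bd DD unfolding P_def by (auto simp: PiE_iff extensional_def)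
      qed
    qed
    then show "a = b" using ad bd DD by simp
  qed
  have img: "\<phi> ` P = hball q x A r"
  proof
    show "\<phi> ` P \<subseteq> hball q x A r"
    proof
      fix y assume "y \<in> \<phi> ` P"
      then obtain D h where dh: "(D,h) \<in> P" "y = \<phi> (D,h)" by auto
      have "{i\<in>A. y i \<noteq> x i} = D" using key[OF dh(1)] dh P_def by auto
      then show "y \<in> hball q x A r" using dh xq unfolding hball_def P_def \<phi>_def by (auto simp: PiE_iff)
    qed
  next
    show "hball q x A r \<subseteq> \<phi> ` P"
    proof
      fix y assume y: "y \<in> hball q x A r"
      define D where "D = {i\<in>A. y i \<noteq> x i}"
      have "(D, restrict y D) \<in> P" using y unfolding P_def D_def hball_def by auto
      moreover have "\<phi> (D, restrict y D) = y" using y unfolding \<phi>_def D_def hball_def by (auto simp: fun_eq_iff)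
      ultimately show "y \<in> \<phi> ` P" by (metis image_eqI)
    qed
  qed
  have "card (hball q x A r) = card P" using card_image[OF inj] img by simp
  also have "\<dots> = (\<Sum>D\<in>{D. D\<subseteq>A \<and> card D \<le> r}. card (PiE D (\<lambda>i. {..<q} - {x i})))"
    unfolding P_def using fin by (intro card_SigmaI) (auto intro: finite_subset finite_PiE)
  also have "\<dots> = (\<Sum>D\<in>{D. D\<subseteq>A \<and> card D \<le> r}. (q - 1) ^ card D)"
  proof (rule sum.cong[OF refl])
    fix D assume D: "D \<in> {D. D\<subseteq>A \<and> card D \<le> r}"
    then have fD: "finite D" using fin finite_subset by auto
    have "card (PiE D (\<lambda>i. {..<q} - {x i})) = (\<Prod>i\<in>D. card ({..<q} - {x i}))" using card_PiE[OF fD] .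
    also have "\<dots> = (\<Prod>i\<in>D. q - 1)" using D xq by (intro prod.cong) auto
    finally show "card (PiE D (\<lambda>i. {..<q} - {x i})) = (q - 1) ^ card D" by simp
  qed
  also have "\<dots> = ball_vol q (card A) r" unfolding ball_vol_def using group_card_sum[OF fin] by simp
  finally show ?thesis .
qed

lemma ball_vol_full: "q \<ge> 1 \<Longrightarrow> ball_vol q n n = q ^ n"
proof -
  assume q: "q \<ge> 1"
  have "q ^ n = ((q - 1) + 1) ^ n" using q by simp
  also have "\<dots> = (\<Sum>k\<le>n. (n choose k) * (q-1)^k)" by (subst binomial_ring) simp
  finally show ?thesis unfolding ball_vol_def by (simp add: atLeast0AtMost)
qed

lemma cube_hball: "cube q n = hball q (\<lambda>_. 0) {..<n} n"
proof -
  have c: "\<And>y::nat\<Rightarrow>nat. card {i\<in>{..<n}. y i \<noteq> 0} \<le> n"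
    by (rule order.trans[OF card_mono[of "{..<n}"]]) auto
  show ?thesis unfolding cube_def hball_def using c by (auto simp del: neq0_conv)
qed

lemma card_cube: "q \<ge> 1 \<Longrightarrow> card (cube q n) = q ^ n"
  using hball_card[of "{..<n}" "\<lambda>_. 0" q n] ball_vol_full[of q n] by (simp add: cube_hball)

lemma finite_cube: "q \<ge> 1 \<Longrightarrow> finite (cube q n)"
  using card_cube[of q n] by (metis card.infinite less_not_refl2 nat_zero_less_power_iff zero_less_one le_trans[of 1 q] order.strict_trans2 zero_less_Suc One_nat_def)

lemma hamming_sym: "hamming n x y = hamming n y x"
  unfolding hamming_def by (metis (mono_tags) )

lemma ball_eq: "x \<in> cube q n \<Longrightarrow> {y \<in> cube q n. hamming n x y \<le> t} = hball q x {..<n} t"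
proof -
  assume x: "x \<in> cube q n"
  have e: "\<And>y. {i. i < n \<and> x i \<noteq> y i} = {i\<in>{..<n}. y i \<noteq> x i}" by auto
  show ?thesis using x unfolding cube_def hball_def hamming_def e by auto
qed

lemma binom_ineq:
  "j + m \<le> t \<Longrightarrow> t \<le> n \<Longrightarrow> ((n-m) choose j) * (n-t)^m \<le> (n choose (j+m)) * t^m"
proof (induction m arbitrary: j)
  case 0 then show ?case by simp
next
  case (Suc m)
  have IH: "((n-m) choose (j+1)) * (n-t)^m \<le> (n choose (j+1+m)) * t^m"
    using Suc.IH[of "j+1"] Suc.prems by simp
  have nm: "n - m = Suc (n - Suc m)" using Suc.prems by simp
  have id: "Suc (n - Suc m) * ((n - Suc m) choose j) = ((n-m) choose (j+1)) * (j+1)"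
    using Suc_times_binomial_eq[of "n - Suc m" j] nm by simp
  have "((n - Suc m) choose j) * (n - t) * (j+1) \<le> ((n - Suc m) choose j) * (n - m) * t"
  proof -
    have "(n-t) * (j+1) \<le> (n-m) * t" using Suc.prems by (intro mult_mono) auto
    then show ?thesis by (metis mult.assoc mult_le_mono2)
  qed
  also have "\<dots> = (Suc (n - Suc m) * ((n - Suc m) choose j)) * t" using nm by simp
  also have "\<dots> = ((n-m) choose (j+1)) * (j+1) * t" by (simp only: id)
  finally have A: "((n - Suc m) choose j) * (n - t) \<le> ((n-m) choose (j+1)) * t"
    by (metis mult.assoc mult.commute mult_le_cancel1 Suc_eq_plus1 zero_less_Suc)
  have "((n - Suc m) choose j) * (n-t)^(Suc m) = (((n - Suc m) choose j) * (n - t)) * (n-t)^m" by simp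
  also have "\<dots> \<le> (((n-m) choose (j+1)) * t) * (n-t)^m" using A by (rule mult_right_mono) simp
  also have "\<dots> = t * (((n-m) choose (j+1)) * (n-t)^m)" by simp
  also have "\<dots> \<le> t * ((n choose (j+1+m)) * t^m)" using IH by (rule mult_left_mono) simp
  also have "\<dots> = (n choose (j + Suc m)) * t ^ Suc m" by simp
  finally show ?case .
qed

lemma ball_vol_pos: "ball_vol q n r \<ge> 1"
proof -
  have "(\<Sum>i\<in>{0}. (n choose i) * (q - 1) ^ i) \<le> (\<Sum>i=0..r. (n choose i) * (q - 1) ^ i)"
    by (intro sum_mono2) auto
  then show ?thesis unfolding ball_vol_def by simp
qed

lemma finite_hball: "finite A \<Longrightarrow> \<forall>i\<in>A. x i < q \<Longrightarrow> finite (hball q x A r)"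
  using hball_card[of A x q r] ball_vol_pos[of q "card A" r] by (metis card.infinite not_one_le_zero)

lemma vol_shift:
  assumes "m \<le> t" "t \<le> n"
  shows "(q-1)^m * ball_vol q (n-m) (t-m) * (n-t)^m \<le> t^m * ball_vol q n t"
proof -
  have "(q-1)^m * ball_vol q (n-m) (t-m) * (n-t)^m
      = (\<Sum>j=0..t-m. ((n-m) choose j) * (n-t)^m * (q-1)^(j+m))"
    unfolding ball_vol_def by (simp add: sum_distrib_left sum_distrib_right power_add mult_ac)
  also have "\<dots> \<le> (\<Sum>j=0..t-m. t^m * ((n choose (j+m)) * (q-1)^(j+m)))"
  proof (rule sum_mono)
    fix j assume "j \<in> {0..t-m}"
    then have "((n-m) choose j) * (n-t)^m \<le> (n choose (j+m)) * t^m" using assms by (intro binom_ineq) auto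
    then show "((n-m) choose j) * (n-t)^m * (q-1)^(j+m) \<le> t^m * ((n choose (j+m)) * (q-1)^(j+m))"
      by (metis mult.commute mult_le_mono1 mult.assoc)
  qed
  also have "\<dots> = t^m * (\<Sum>j=0..t-m. (n choose (j+m)) * (q-1)^(j+m))" by (simp add: sum_distrib_left)
  also have "(\<Sum>j=0..t-m. (n choose (j+m)) * (q-1)^(j+m)) = (\<Sum>i=0+m..(t-m)+m. (n choose i) * (q-1)^i)"
    by (rule sum.shift_bounds_cl_nat_ivl[symmetric])
  also have "\<dots> \<le> (\<Sum>i=0..t. (n choose i) * (q-1)^i)"
    using assms by (intro sum_mono2) auto
  finally show ?thesis unfolding ball_vol_def by (simp add: mult_le_mono2)
qed

lemma badM_bound:
  assumes q: "q \<ge> 1" and x: "x \<in> cube q n" and M: "M \<subseteq> {..<n}" and t: "t \<le> n"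
  shows "card {y \<in> hball q x {..<n} t. \<forall>i\<in>M. y i \<noteq> x i} * (n-t)^(card M) \<le> t^(card M) * ball_vol q n t"
proof (cases "card M \<le> t")
  case False
  have "{y \<in> hball q x {..<n} t. \<forall>i\<in>M. y i \<noteq> x i} = {}"
  proof (rule ccontr)
    assume "\<not> ?thesis"
    then obtain y where y: "y \<in> hball q x {..<n} t" "\<forall>i\<in>M. y i \<noteq> x i" by auto
    have "card M \<le> card {i\<in>{..<n}. y i \<noteq> x i}" using y M by (intro card_mono) auto
    then show False using y False unfolding hball_def by auto
  qed
  then show ?thesis by (simp only: card.empty mult_0)
next
  case True
  define m where "m = card M"
  have fM: "finite M" using M finite_subset by auto
  define H where "H = PiE M (\<lambda>i. {..<q} - {x i})"
  define X where "X = (\<lambda>h i. if i \<in> M then h i else x i)"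
  have xq: "\<forall>i<n. x i < q" using x unfolding cube_def by auto
  have sub: "{y \<in> hball q x {..<n} t. \<forall>i\<in>M. y i \<noteq> x i} \<subseteq> (\<Union>h\<in>H. hball q (X h) ({..<n} - M) (t - m))"
  proof
    fix y assume y: "y \<in> {y \<in> hball q x {..<n} t. \<forall>i\<in>M. y i \<noteq> x i}"
    have hH: "restrict y M \<in> H" using y M unfolding H_def hball_def by auto
    have e: "{i \<in> {..<n} - M. y i \<noteq> X (restrict y M) i} = {i\<in>{..<n}. y i \<noteq> x i} - M"
      unfolding X_def by auto
    have "card ({i\<in>{..<n}. y i \<noteq> x i} - M) = card {i\<in>{..<n}. y i \<noteq> x i} - m"
      unfolding m_def using y M by (intro card_Diff_subset fM) auto
    also have "\<dots> \<le> t - m" using y unfolding hball_def by auto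
    finally have c: "card {i \<in> {..<n} - M. y i \<noteq> X (restrict y M) i} \<le> t - m" unfolding e .
    have "\<forall>i\<in>{..<n} - M. y i < q" "\<forall>i. i \<notin> {..<n} - M \<longrightarrow> y i = X (restrict y M) i"
      using y unfolding hball_def X_def by auto
    then have "y \<in> hball q (X (restrict y M)) ({..<n} - M) (t - m)"
      using c unfolding hball_def by blast
    then show "y \<in> (\<Union>h\<in>H. hball q (X h) ({..<n} - M) (t - m))" using hH by auto
  qed
  have fH: "finite H" unfolding H_def using fM by (intro finite_PiE) auto
  have cH: "card H = (q-1)^m"
  proof -
    have "card H = (\<Prod>i\<in>M. card ({..<q} - {x i}))" unfolding H_def using card_PiE[OF fM] .
    also have "\<dots> = (\<Prod>i\<in>M. q - 1)" using M xq by (intro prod.cong) auto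
    finally show ?thesis by (simp add: m_def)
  qed
  have "card {y \<in> hball q x {..<n} t. \<forall>i\<in>M. y i \<noteq> x i} \<le> card (\<Union>h\<in>H. hball q (X h) ({..<n} - M) (t - m))"
    using fH xq by (intro card_mono[OF _ sub] finite_UN_I finite_hball) (auto simp: X_def)
  also have "\<dots> \<le> (\<Sum>h\<in>H. card (hball q (X h) ({..<n} - M) (t - m)))" using card_UN_le[OF fH] .
  also have "\<dots> = (\<Sum>h\<in>H. ball_vol q (n - m) (t - m))"
  proof (rule sum.cong[OF refl])
    fix h assume "h \<in> H"
    have "\<forall>i\<in>{..<n} - M. X h i < q" using xq unfolding X_def by auto
    then have "card (hball q (X h) ({..<n} - M) (t - m)) = ball_vol q (card ({..<n} - M)) (t - m)"
      by (intro hball_card) auto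
    also have "card ({..<n} - M) = n - m" unfolding m_def using M fM by (simp add: card_Diff_subset)
    finally show "card (hball q (X h) ({..<n} - M) (t - m)) = ball_vol q (n - m) (t - m)" .
  qed
  also have "\<dots> = (q-1)^m * ball_vol q (n - m) (t - m)" using cH by simp
  finally have "card {y \<in> hball q x {..<n} t. \<forall>i\<in>M. y i \<noteq> x i} * (n-t)^m \<le> (q-1)^m * ball_vol q (n - m) (t - m) * (n-t)^m"
    by (rule mult_right_mono) simp
  also have "\<dots> \<le> t^m * ball_vol q n t" using vol_shift[of m t n q] True t m_def by simp
  finally show ?thesis unfolding m_def .
qed

lemma bad_bound:
  assumes q: "q \<ge> 1" and z: "z \<in> cube q n" and T: "T \<subseteq> {..<n}" and t: "t \<le> n"
  shows "card {y\<in>hball q z {..<n} t. m \<le> card {i\<in>T. y i \<noteq> z i}} * (n-t)^m \<le> (card T choose m) * (t^m * ball_vol q n t)"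
proof -
  have fT: "finite T" using T finite_subset by auto
  define \<M> where "\<M> = {M. M \<subseteq> T \<and> card M = m}"
  have fM: "finite \<M>" unfolding \<M>_def using fT by auto
  have sub: "{y\<in>hball q z {..<n} t. m \<le> card {i\<in>T. y i \<noteq> z i}} \<subseteq> (\<Union>M\<in>\<M>. {y \<in> hball q z {..<n} t. \<forall>i\<in>M. y i \<noteq> z i})"
  proof
    fix y assume y: "y \<in> {y\<in>hball q z {..<n} t. m \<le> card {i\<in>T. y i \<noteq> z i}}"
    then obtain M where M: "M \<subseteq> {i\<in>T. y i \<noteq> z i}" "card M = m" by (metis (lifting) mem_Collect_eq obtain_subset_with_card_n)
    then show "y \<in> (\<Union>M\<in>\<M>. {y \<in> hball q z {..<n} t. \<forall>i\<in>M. y i \<noteq> z i})" using y unfolding \<M>_def by auto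
  qed
  have zq: "\<forall>i\<in>{..<n}. z i < q" using z unfolding cube_def by auto
  have "card {y\<in>hball q z {..<n} t. m \<le> card {i\<in>T. y i \<noteq> z i}} \<le> card (\<Union>M\<in>\<M>. {y \<in> hball q z {..<n} t. \<forall>i\<in>M. y i \<noteq> z i})"
    using fM finite_hball[OF _ zq] by (intro card_mono[OF _ sub]) auto
  also have "\<dots> \<le> (\<Sum>M\<in>\<M>. card {y \<in> hball q z {..<n} t. \<forall>i\<in>M. y i \<noteq> z i})" using card_UN_le[OF fM] .
  finally have "card {y\<in>hball q z {..<n} t. m \<le> card {i\<in>T. y i \<noteq> z i}} * (n-t)^m \<le> (\<Sum>M\<in>\<M>. card {y \<in> hball q z {..<n} t. \<forall>i\<in>M. y i \<noteq> z i}) * (n-t)^m"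
    by (rule mult_right_mono) simp
  also have "\<dots> = (\<Sum>M\<in>\<M>. card {y \<in> hball q z {..<n} t. \<forall>i\<in>M. y i \<noteq> z i} * (n-t)^m)" by (simp add: sum_distrib_right)
  also have "\<dots> \<le> (\<Sum>M\<in>\<M>. t^m * ball_vol q n t)"
  proof (rule sum_mono)
    fix M assume "M \<in> \<M>"
    then have "M \<subseteq> {..<n}" "card M = m" using T unfolding \<M>_def by auto
    then show "card {y \<in> hball q z {..<n} t. \<forall>i\<in>M. y i \<noteq> z i} * (n-t)^m \<le> t^m * ball_vol q n t"
      using badM_bound[OF q z _ t, of M] by simp
  qed
  also have "\<dots> = (card T choose m) * (t^m * ball_vol q n t)" using n_subsets[OF fT, of m] unfolding \<M>_def by simp
  finally show ?thesis .
qed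

lemma inter_bound:
  assumes q: "q \<ge> 1" and x: "x \<in> cube q n" and x': "x' \<in> cube q n"
    and T: "T \<subseteq> {i. i < n \<and> x i \<noteq> x' i}" and cT: "card T + 1 = 2 * m" and t: "t \<le> n"
  shows "card (hball q x {..<n} t \<inter> hball q x' {..<n} t) * (n-t)^m \<le> 2 * ((card T choose m) * (t^m * ball_vol q n t))"
proof -
  have T': "T \<subseteq> {..<n}" using T by auto
  have fT: "finite T" using T' finite_subset by auto
  define Bad where "Bad z = {y\<in>hball q z {..<n} t. m \<le> card {i\<in>T. y i \<noteq> z i}}" for z
  have sub: "hball q x {..<n} t \<inter> hball q x' {..<n} t \<subseteq> Bad x \<union> Bad x'"
  proof
    fix y assume y: "y \<in> hball q x {..<n} t \<inter> hball q x' {..<n} t"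
    have "T \<subseteq> {i\<in>T. y i \<noteq> x i} \<union> {i\<in>T. y i \<noteq> x' i}" using T by auto
    then have "card T \<le> card ({i\<in>T. y i \<noteq> x i} \<union> {i\<in>T. y i \<noteq> x' i})" using fT by (intro card_mono) auto
    also have "\<dots> \<le> card {i\<in>T. y i \<noteq> x i} + card {i\<in>T. y i \<noteq> x' i}" by (rule card_Un_le)
    finally have "m \<le> card {i\<in>T. y i \<noteq> x i} \<or> m \<le> card {i\<in>T. y i \<noteq> x' i}" using cT by linarith
    then show "y \<in> Bad x \<union> Bad x'" using y unfolding Bad_def by auto
  qed
  have xq: "\<forall>i\<in>{..<n}. x i < q" using x unfolding cube_def by auto
  have x'q: "\<forall>i\<in>{..<n}. x' i < q" using x' unfolding cube_def by auto
  have fB: "finite (Bad x)" "finite (Bad x')" unfolding Bad_def using finite_hball[OF _ xq] finite_hball[OF _ x'q] by auto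
  have "card (hball q x {..<n} t \<inter> hball q x' {..<n} t) \<le> card (Bad x \<union> Bad x')" using fB by (intro card_mono[OF _ sub]) auto
  also have "\<dots> \<le> card (Bad x) + card (Bad x')" by (rule card_Un_le)
  finally have "card (hball q x {..<n} t \<inter> hball q x' {..<n} t) * (n-t)^m \<le> (card (Bad x) + card (Bad x')) * (n-t)^m"
    by (rule mult_right_mono) simp
  also have "\<dots> = card (Bad x) * (n-t)^m + card (Bad x') * (n-t)^m" by (simp add: algebra_simps)
  also have "\<dots> \<le> (card T choose m) * (t^m * ball_vol q n t) + (card T choose m) * (t^m * ball_vol q n t)"
    unfolding Bad_def by (intro add_mono bad_bound[OF q x T' t] bad_bound[OF q x' T' t])
  finally show ?thesis by simp
qed

lemma hamming_tri: "hamming n x x' \<le> hamming n x y + hamming n y x'"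
proof -
  have "{i. i < n \<and> x i \<noteq> x' i} \<subseteq> {i. i < n \<and> x i \<noteq> y i} \<union> {i. i < n \<and> y i \<noteq> x' i}" by auto
  then have "card {i. i < n \<and> x i \<noteq> x' i} \<le> card ({i. i < n \<and> x i \<noteq> y i} \<union> {i. i < n \<and> y i \<noteq> x' i})"
    by (intro card_mono) auto
  also have "\<dots> \<le> card {i. i < n \<and> x i \<noteq> y i} + card {i. i < n \<and> y i \<noteq> x' i}" by (rule card_Un_le)
  finally show ?thesis unfolding hamming_def .
qed

lemma inter_empty:
  assumes "hamming n x x' > 2 * t"
  shows "hball q x {..<n} t \<inter> hball q x' {..<n} t = {}"
proof (rule ccontr)
  assume "\<not> ?thesis"
  then obtain y where y: "y \<in> hball q x {..<n} t" "y \<in> hball q x' {..<n} t" by auto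
  have e: "\<And>z. hamming n z y = card {i\<in>{..<n}. y i \<noteq> z i}" unfolding hamming_def by (metis lessThan_iff)
  have "hamming n x y \<le> t" "hamming n x' y \<le> t" using y unfolding hball_def e by auto
  then show False using hamming_tri[of n x x' y] hamming_sym[of n y x'] assms by linarith
qed

lemma ball_vol_4: "n \<ge> 1 \<Longrightarrow> q \<ge> 1 \<Longrightarrow> real (ball_vol q n 4) \<le> 5 * real n ^ 4 * real q ^ 4"
proof -
  assume n: "n \<ge> 1" and q: "q \<ge> 1"
  have "ball_vol q n 4 \<le> (\<Sum>i=0..(4::nat). n^4 * q^4)"
    unfolding ball_vol_def
  proof (rule sum_mono)
    fix i assume i: "i \<in> {0..(4::nat)}"
    have "(n choose i) \<le> n ^ i"
    proof (cases "i \<le> n")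
      case True then show ?thesis by (rule binomial_le_pow)
    next
      case False then have "n choose i = 0" by (intro binomial_eq_0) simp
      then show ?thesis by (metis zero_le)
    qed
    also have "\<dots> \<le> n ^ 4" using i n by (intro power_increasing) auto
    finally have a: "(n choose i) \<le> n^4" .
    have "(q-1)^i \<le> q^i" by (intro power_mono) auto
    also have "\<dots> \<le> q ^ 4" using i q by (intro power_increasing) auto
    finally have b: "(q-1)^i \<le> q^4" .
    show "(n choose i) * (q - 1) ^ i \<le> n ^ 4 * q ^ 4" using a b by (rule mult_le_mono)
  qed
  also have "\<dots> = 5 * n^4 * q^4" by simp
  finally have "ball_vol q n 4 \<le> 5 * n^4 * q^4" .
  then have "real (ball_vol q n 4) \<le> real (5 * n^4 * q^4)" by (simp only: of_nat_le_iff)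
  then show ?thesis by simp
qed

lemma cs_real:
  fixes f :: "'a \<Rightarrow> real"
  shows "(\<Sum>y\<in>C. f y)^2 \<le> real (card C) * (\<Sum>y\<in>C. (f y)^2)"
  using Cauchy_Schwarz_ineq_sum[of "\<lambda>_. 1" f C] by simp

lemma double_count:
  fixes S :: "(nat\<Rightarrow>nat) set" and B :: "(nat\<Rightarrow>nat) \<Rightarrow> (nat\<Rightarrow>nat) set"
  assumes fC: "finite C" and fS: "finite S" and BC: "\<And>x. x \<in> S \<Longrightarrow> B x \<subseteq> C"
  shows "real (\<Sum>x\<in>S. card (B x))^2 \<le> real (card C) * real (\<Sum>x\<in>S. \<Sum>x'\<in>S. card (B x \<inter> B x'))"
proof -
  define d where "d y = (\<Sum>x\<in>S. if y \<in> B x then 1 else 0 :: real)" for y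
  have fB: "\<And>x. x \<in> S \<Longrightarrow> finite (B x)" using BC fC finite_subset by blast
  have s1: "(\<Sum>y\<in>C. d y) = real (\<Sum>x\<in>S. card (B x))"
  proof -
    have "(\<Sum>y\<in>C. d y) = (\<Sum>x\<in>S. \<Sum>y\<in>C. if y \<in> B x then 1 else 0 :: real)"
      unfolding d_def by (rule sum.swap)
    also have "\<dots> = (\<Sum>x\<in>S. real (card (B x)))"
    proof (rule sum.cong[OF refl])
      fix x assume x: "x \<in> S"
      have "(\<Sum>y\<in>C. if y \<in> B x then 1 else 0 :: real) = (\<Sum>y\<in>{y\<in>C. y \<in> B x}. 1)"
        using sum.inter_filter[OF fC, of "\<lambda>_. 1::real" "\<lambda>y. y\<in>B x"] by simp
      also have "{y\<in>C. y \<in> B x} = B x" using BC[OF x] by auto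
      finally show "(\<Sum>y\<in>C. if y \<in> B x then 1 else 0 :: real) = real (card (B x))" by simp
    qed
    finally show ?thesis by simp
  qed
  have s2: "(\<Sum>y\<in>C. (d y)^2) = real (\<Sum>x\<in>S. \<Sum>x'\<in>S. card (B x \<inter> B x'))"
  proof -
    have "(\<Sum>y\<in>C. (d y)^2) = (\<Sum>y\<in>C. \<Sum>x\<in>S. \<Sum>x'\<in>S. (if y \<in> B x \<inter> B x' then 1 else 0 :: real))"
      unfolding d_def power2_eq_square sum_product by (intro sum.cong refl) auto
    also have "\<dots> = (\<Sum>x\<in>S. \<Sum>y\<in>C. \<Sum>x'\<in>S. (if y \<in> B x \<inter> B x' then 1 else 0 :: real))"
      by (rule sum.swap)
    also have "\<dots> = (\<Sum>x\<in>S. \<Sum>x'\<in>S. \<Sum>y\<in>C. (if y \<in> B x \<inter> B x' then 1 else 0 :: real))"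
      by (intro sum.cong refl sum.swap)
    also have "\<dots> = (\<Sum>x\<in>S. \<Sum>x'\<in>S. real (card (B x \<inter> B x')))"
    proof (intro sum.cong refl)
      fix x x' assume x: "x \<in> S"
      have "(\<Sum>y\<in>C. if y \<in> B x \<inter> B x' then 1 else 0 :: real) = (\<Sum>y\<in>{y\<in>C. y \<in> B x \<inter> B x'}. 1)"
        using sum.inter_filter[OF fC, of "\<lambda>_. 1::real" "\<lambda>y. y\<in>B x \<inter> B x'"] by simp
      also have "{y\<in>C. y \<in> B x \<inter> B x'} = B x \<inter> B x'" using BC[OF x] by auto
      finally show "(\<Sum>y\<in>C. if y \<in> B x \<inter> B x' then 1 else 0 :: real) = real (card (B x \<inter> B x'))" by simp
    qed
    finally show ?thesis by simp
  qed
  show ?thesis using cs_real[of d C] s1 s2 by simp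
qed

lemma diff_nonempty:
  assumes "x \<in> cube q n" "x' \<in> cube q n" "x \<noteq> x'"
  shows "hamming n x x' \<ge> 1"
proof (rule ccontr)
  assume "\<not> ?thesis"
  then have c: "card {i. i < n \<and> x i \<noteq> x' i} = 0" unfolding hamming_def by linarith
  have "finite {i. i < n \<and> x i \<noteq> x' i}" by simp
  with c have e: "{i. i < n \<and> x i \<noteq> x' i} = {}" using card_0_eq by blast
  have "x i = x' i" for i
  proof (cases "i < n")
    case True then show ?thesis using e by blast
  next
    case False then show ?thesis using assms(1,2) unfolding cube_def by auto
  qed
  then show False using assms(3) by auto
qed

lemma per_x:
  assumes q: "q \<ge> 1" and S: "S \<subseteq> cube q n" and x: "x \<in> S" and tn: "t < n" and fS: "finite S"
  shows "real (\<Sum>x'\<in>S. card (hball q x {..<n} t \<inter> hball q x' {..<n} t))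
    \<le> real (ball_vol q n t) + real (ball_vol q n 4) * (2 * t * real (ball_vol q n t) / real (n-t))
       + real (induced_degree n t S x) * (20 * t^3 * real (ball_vol q n t) / real (n-t)^3)"
proof -
  define V where "V = real (ball_vol q n t)"
  define c1 where "c1 = 2 * t * V / real (n-t)"
  define c3 where "c3 = 20 * t^3 * V / real (n-t)^3"
  have a: "real (n-t) > 0" using tn by simp
  have V0: "V \<ge> 0" unfolding V_def by simp
  have c10: "c1 \<ge> 0" unfolding c1_def using V0 a by simp
  have c30: "c3 \<ge> 0" unfolding c3_def using V0 a by simp
  define g where "g x' = (if x' = x then V else 0) + (if x' \<noteq> x \<and> hamming n x x' \<le> 4 then c1 else 0)
     + (if x' \<noteq> x \<and> 5 \<le> hamming n x x' \<and> hamming n x x' \<le> 2*t then c3 else 0)" for x'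
  have xc: "x \<in> cube q n" using x S by auto
  have xq: "\<forall>i\<in>{..<n}. x i < q" using xc unfolding cube_def by auto
  have pt: "real (card (hball q x {..<n} t \<inter> hball q x' {..<n} t)) \<le> g x'" if x': "x' \<in> S" for x'
  proof -
    have x'c: "x' \<in> cube q n" using x' S by auto
    have hd: "hamming n x x' = card {i. i < n \<and> x i \<noteq> x' i}" unfolding hamming_def ..
    have g0: "g x' \<ge> 0" unfolding g_def using V0 c10 c30 by auto
    show ?thesis
    proof (cases "x' = x")
      case True
      then have "real (card (hball q x {..<n} t \<inter> hball q x' {..<n} t)) = V"
        using hball_card[of "{..<n}" x q t] xq unfolding V_def by simp
      then show ?thesis unfolding g_def using True by simp
    next
      case ne: False
      have h1: "hamming n x x' \<ge> 1" using diff_nonempty[OF xc x'c] ne by auto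
      show ?thesis
      proof (cases "hamming n x x' \<le> 4")
        case True
        obtain T where T: "T \<subseteq> {i. i < n \<and> x i \<noteq> x' i}" "card T = 1"
          using h1 hd by (metis obtain_subset_with_card_n)
        have "card (hball q x {..<n} t \<inter> hball q x' {..<n} t) * (n-t)^1 \<le> 2 * ((card T choose 1) * (t^1 * ball_vol q n t))"
          by (rule inter_bound[OF q xc x'c T(1)]) (use T tn in auto)
        then have "real (card (hball q x {..<n} t \<inter> hball q x' {..<n} t)) * real (n-t) \<le> 2 * t * V"
          unfolding V_def using T(2) by (simp add: of_nat_mult[symmetric] del: of_nat_mult)
        then have "real (card (hball q x {..<n} t \<inter> hball q x' {..<n} t)) \<le> c1"
          unfolding c1_def using a by (simp add: pos_le_divide_eq)
        then show ?thesis unfolding g_def using True ne V0 c30 by auto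
      next
        case F4: False
        show ?thesis
        proof (cases "hamming n x x' \<le> 2*t")
          case True
          have "5 \<le> card {i. i < n \<and> x i \<noteq> x' i}" using F4 hd by simp
          then obtain T where T: "T \<subseteq> {i. i < n \<and> x i \<noteq> x' i}" "card T = 5"
            by (metis obtain_subset_with_card_n)
          have "card (hball q x {..<n} t \<inter> hball q x' {..<n} t) * (n-t)^3 \<le> 2 * ((card T choose 3) * (t^3 * ball_vol q n t))"
            by (rule inter_bound[OF q xc x'c T(1)]) (use T tn in auto)
          moreover have "(card T choose 3) = 10" using T(2) by (simp add: choose_reduce_nat)
          ultimately have "card (hball q x {..<n} t \<inter> hball q x' {..<n} t) * (n-t)^3 \<le> 20 * t^3 * ball_vol q n t" by simp
          then have "real (card (hball q x {..<n} t \<inter> hball q x' {..<n} t)) * real (n-t)^3 \<le> 20 * t^3 * V"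
            unfolding V_def by (simp add: of_nat_mult[symmetric] of_nat_power[symmetric] del: of_nat_mult of_nat_power)
          then have "real (card (hball q x {..<n} t \<inter> hball q x' {..<n} t)) \<le> c3"
            unfolding c3_def using a by (simp add: pos_le_divide_eq)
          then show ?thesis unfolding g_def using True F4 ne V0 c10 by auto
        next
          case False
          then have "hball q x {..<n} t \<inter> hball q x' {..<n} t = {}" by (intro inter_empty) simp
          then show ?thesis using g0 by simp
        qed
      qed
    qed
  qed
  have "real (\<Sum>x'\<in>S. card (hball q x {..<n} t \<inter> hball q x' {..<n} t)) \<le> (\<Sum>x'\<in>S. g x')"
    unfolding of_nat_sum using pt by (intro sum_mono) auto
  also have "\<dots> = V + c1 * card {x'\<in>S. x' \<noteq> x \<and> hamming n x x' \<le> 4}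
      + c3 * card {x'\<in>S. x' \<noteq> x \<and> 5 \<le> hamming n x x' \<and> hamming n x x' \<le> 2*t}"
  proof -
    have e1: "(\<Sum>x'\<in>S. (if x' = x then V else 0)) = V" using x fS by simp
    have e2: "(\<Sum>x'\<in>S. (if x' \<noteq> x \<and> hamming n x x' \<le> 4 then c1 else 0)) = c1 * card {x'\<in>S. x' \<noteq> x \<and> hamming n x x' \<le> 4}"
      using sum.inter_filter[OF fS, of "\<lambda>_. c1" "\<lambda>x'. x' \<noteq> x \<and> hamming n x x' \<le> 4"] by (simp add: mult.commute)
    have e3: "(\<Sum>x'\<in>S. (if x' \<noteq> x \<and> 5 \<le> hamming n x x' \<and> hamming n x x' \<le> 2*t then c3 else 0)) = c3 * card {x'\<in>S. x' \<noteq> x \<and> 5 \<le> hamming n x x' \<and> hamming n x x' \<le> 2*t}"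
      using sum.inter_filter[OF fS, of "\<lambda>_. c3" "\<lambda>x'. x' \<noteq> x \<and> 5 \<le> hamming n x x' \<and> hamming n x x' \<le> 2*t"] by (simp add: mult.commute)
    show ?thesis unfolding g_def sum.distrib e1 e2 e3 ..
  qed
  also have "\<dots> \<le> V + c1 * real (ball_vol q n 4) + c3 * real (induced_degree n t S x)"
  proof -
    have "{x'\<in>S. x' \<noteq> x \<and> hamming n x x' \<le> 4} \<subseteq> {y\<in>cube q n. hamming n x y \<le> 4}" using S by auto
    also have "\<dots> = hball q x {..<n} 4" by (rule ball_eq[OF xc])
    finally have "card {x'\<in>S. x' \<noteq> x \<and> hamming n x x' \<le> 4} \<le> card (hball q x {..<n} 4)"
      by (rule card_mono[rotated]) (rule finite_hball[OF _ xq], simp)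
    also have "\<dots> = ball_vol q n 4" using hball_card[of "{..<n}" x q 4] xq by simp
    finally have A: "real (card {x'\<in>S. x' \<noteq> x \<and> hamming n x x' \<le> 4}) \<le> real (ball_vol q n 4)" by simp
    have "{x'\<in>S. x' \<noteq> x \<and> 5 \<le> hamming n x x' \<and> hamming n x x' \<le> 2*t} \<subseteq> {u \<in> S. u \<noteq> x \<and> hamming n u x \<le> 2 * t}"
    proof
      fix u assume u: "u \<in> {x'\<in>S. x' \<noteq> x \<and> 5 \<le> hamming n x x' \<and> hamming n x x' \<le> 2*t}"
      have "hamming n u x = hamming n x u" by (rule hamming_sym)
      then show "u \<in> {u \<in> S. u \<noteq> x \<and> hamming n u x \<le> 2 * t}" using u by simp
    qed
    then have "card {x'\<in>S. x' \<noteq> x \<and> 5 \<le> hamming n x x' \<and> hamming n x x' \<le> 2*t} \<le> induced_degree n t S x"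
      unfolding induced_degree_def using fS by (intro card_mono) auto
    then have B: "real (card {x'\<in>S. x' \<noteq> x \<and> 5 \<le> hamming n x x' \<and> hamming n x x' \<le> 2*t}) \<le> real (induced_degree n t S x)" by simp
    show ?thesis using mult_left_mono[OF A c10] mult_left_mono[OF B c30] by linarith
  qed
  finally show ?thesis unfolding V_def c1_def c3_def by (simp add: mult_ac)
qed

lemma main_ineq:
  assumes q: "q \<ge> 1" and S: "S \<subseteq> cube q n" and Sne: "S \<noteq> {}" and tn: "t < n"
  shows "real (card S) * real (ball_vol q n t) \<le> real q ^ n * (1 + real (ball_vol q n 4) * (2 * real t / real (n-t))
          + real (max_degree n t S) * (20 * real t^3 / real (n-t)^3))"
proof -
  define V where "V = real (ball_vol q n t)"
  define W where "W = real (ball_vol q n 4)"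
  define D where "D = real (max_degree n t S)"
  define K where "K = 1 + W * (2 * real t / real (n-t)) + D * (20 * real t^3 / real (n-t)^3)"
  define N where "N = real (card S)"
  have fC: "finite (cube q n)" using finite_cube[OF q] .
  have fS: "finite S" using finite_subset[OF S fC] .
  have a: "real (n-t) > 0" using tn by simp
  have V1: "V \<ge> 1" unfolding V_def using ball_vol_pos[of q n t] by simp
  have N1: "N \<ge> 1" unfolding N_def using Sne fS by (simp add: Suc_leI card_gt_0_iff)
  have BC: "\<And>x. x \<in> S \<Longrightarrow> hball q x {..<n} t \<subseteq> cube q n"
    using ball_eq S by blast
  have cardB: "\<And>x. x \<in> S \<Longrightarrow> card (hball q x {..<n} t) = ball_vol q n t"
  proof -
    fix x assume "x \<in> S"
    then have "\<forall>i\<in>{..<n}. x i < q" using S unfolding cube_def by auto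
    then show "card (hball q x {..<n} t) = ball_vol q n t" using hball_card[of "{..<n}" x q t] by simp
  qed
  note dc = double_count[of "cube q n" S "\<lambda>x. hball q x {..<n} t", OF fC fS BC]
  have s1: "real (\<Sum>x\<in>S. card (hball q x {..<n} t)) = N * V"
    unfolding N_def V_def using cardB by simp
  have degD: "\<And>x. x \<in> S \<Longrightarrow> real (induced_degree n t S x) \<le> D"
    unfolding D_def max_degree_def using Sne fS by auto
  have "real (\<Sum>x\<in>S. \<Sum>x'\<in>S. card (hball q x {..<n} t \<inter> hball q x' {..<n} t))
     = (\<Sum>x\<in>S. real (\<Sum>x'\<in>S. card (hball q x {..<n} t \<inter> hball q x' {..<n} t)))" by simp
  also have "\<dots> \<le> (\<Sum>x\<in>S. V * K)"
  proof (rule sum_mono)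
    fix x assume x: "x \<in> S"
    note p = per_x[OF q S x tn fS]
    have "real (induced_degree n t S x) * (20 * real t^3 * V / real (n-t)^3) \<le> D * (20 * real t^3 * V / real (n-t)^3)"
      using degD[OF x] a V1 by (intro mult_right_mono) auto
    then have "real (\<Sum>x'\<in>S. card (hball q x {..<n} t \<inter> hball q x' {..<n} t))
       \<le> V + W * (2 * real t * V / real (n-t)) + D * (20 * real t^3 * V / real (n-t)^3)"
      using p unfolding V_def W_def by (meson add_left_mono order.trans)
    also have "\<dots> = V * K" unfolding K_def by (simp add: algebra_simps)
    finally show "real (\<Sum>x'\<in>S. card (hball q x {..<n} t \<inter> hball q x' {..<n} t)) \<le> V * K" .
  qed
  also have "\<dots> = N * V * K" unfolding N_def by simp
  finally have s2: "real (\<Sum>x\<in>S. \<Sum>x'\<in>S. card (hball q x {..<n} t \<inter> hball q x' {..<n} t)) \<le> N * V * K" .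
  have cC: "real (card (cube q n)) = real q ^ n" using card_cube[OF q] by simp
  have "(N * V)^2 \<le> real q ^ n * (N * V * K)"
  proof -
    have "(N * V)^2 \<le> real q ^ n * real (\<Sum>x\<in>S. \<Sum>x'\<in>S. card (hball q x {..<n} t \<inter> hball q x' {..<n} t))"
      using dc unfolding s1 cC .
    also have "\<dots> \<le> real q ^ n * (N * V * K)" using s2 by (rule mult_left_mono) simp
    finally show ?thesis .
  qed
  then have "(N * V) * (N * V) \<le> (N * V) * (real q ^ n * K)" by (simp add: power2_eq_square mult_ac)
  then have "N * V \<le> real q ^ n * K" using N1 V1 by (simp add: mult_le_cancel_left)
  then show ?thesis unfolding N_def V_def K_def W_def D_def by simp
qed

lemma final_arith:
  fixes s R D W x y qq :: real
  assumes s1: "s \<ge> 800* qq^4" and qq: "qq \<ge> 1" and s2: "s \<ge> 20" and R1: "R \<ge> s^8"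
    and R2: "R \<le> 1 + W*x + D*(20*y)" and W0: "0 \<le> W" and W1: "W \<le> 5 * s^8 * qq^4"
    and x0: "0 \<le> x" and x1: "x \<le> 40/s" and y0: "0 \<le> y" and y1: "y \<le> 8000/s^3" and D0: "D \<ge> 0"
  shows "D \<ge> R* s^3/320000"
proof -
  have sp: "s > 0" using s2 by simp
  have "W*x \<le> (5 * s^8 * qq^4) * (40/s)" using W1 x1 W0 x0 by (intro mult_mono) auto
  also have "\<dots> = 200* qq^4* s^7" using sp by (simp add: field_simps power_eq_if)
  also have "\<dots> \<le> s^8/4"
  proof -
    have "200* qq^4* s^7 = (800* qq^4) * s^7 / 4" by simp
    also have "\<dots> \<le> s * s^7 / 4" using s1 sp by (intro divide_right_mono mult_right_mono) auto
    finally show ?thesis by (simp add: power_eq_if)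
  qed
  finally have Wx: "W*x \<le> s^8/4" .
  have one: "1 \<le> s^8/4"
  proof -
    have "(1::real) \<le> s" using s2 by simp
    then have "1 \<le> s^8" by (simp add: one_le_power)
    moreover have "s^8 \<ge> s" using s2 by (metis one_le_numeral dual_order.trans power_increasing power_one_right zero_less_numeral le_numeral_extra(1) less_le_trans not_le one_le_power zero_le_one)
    ultimately show ?thesis using s2 by linarith
  qed
  have Dy: "D*(20*y) \<le> D*(20*(8000/s^3))" using y1 D0 by (intro mult_left_mono) auto
  have "R \<le> R/2 + D*(160000/s^3)" using R1 R2 Wx one Dy by simp
  then have "R/2 \<le> D*160000/s^3" by simp
  then have "R/2 * s^3 \<le> D*160000" using sp by (simp add: pos_le_divide_eq)
  then show ?thesis by simp
qed

theorem lemma2p1: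
  fixes q :: nat
  assumes "q \<ge> 2"
  shows "\<exists>c::real. c > 0 \<and> (\<exists>n0::nat. \<forall>n t S.
           n \<ge> n0 \<longrightarrow> t \<ge> 1 \<longrightarrow> real t \<le> 10 * sqrt (real n) \<longrightarrow>
           S \<subseteq> cube q n \<longrightarrow> real (card S) \<ge> real n ^ 4 * hamming_bound q n t \<longrightarrow>
           real (max_degree n t S) \<ge> c * (real n powr (3/2) / hamming_bound q n t) * real (card S))"
proof (intro exI conjI allI impI)
  show "(1/320000::real) > 0" by simp
  fix n t S
  assume n0: "640000 * q^8 + 400 \<le> n" and t1: "1 \<le> t" and ts: "real t \<le> 10 * sqrt (real n)"
    and S: "S \<subseteq> cube q n" and NS: "real n ^ 4 * hamming_bound q n t \<le> real (card S)"
  have q: "q \<ge> 1" using assms by simp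
  define s where "s = sqrt (real n)"
  have "real (640000 * q^8 + 400) \<le> real n" using n0 by (simp only: of_nat_le_iff)
  then have rn: "real n \<ge> 640000 * real q ^ 8 + 400" by simp
  have n1: "n \<ge> 1" using n0 by simp
  have ns: "real n = s^2" unfolding s_def by simp
  have "(20::real)^2 \<le> real n"
  proof -
    have "0 \<le> 640000 * real q^8" by simp
    moreover have "(20::real)^2 = 400" by simp
    ultimately show ?thesis using rn by linarith
  qed
  then have s20: "s \<ge> 20" unfolding s_def by (rule real_le_rsqrt)
  have s800: "s \<ge> 800 * real q ^ 4" unfolding s_def
  proof (rule real_le_rsqrt)
    show "(800 * real q ^ 4)^2 \<le> real n" using rn by (simp add: power_mult_distrib power_mult[symmetric])
  qed
  have sp: "s > 0" using s20 by simp
  have ts': "real t \<le> 10 * s" using ts s_def by simp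
  have tn_real: "real t \<le> real n / 2"
  proof -
    have "20 * s \<le> s * s" using s20 sp by (intro mult_right_mono) auto
    then have "10 * s * 2 \<le> s * s" by simp
    then show ?thesis using ts' ns by (simp add: power2_eq_square)
  qed
  have tn: "t < n" using tn_real n1 by (simp add: field_simps)
  define a where "a = real (n - t)"
  have a_eq: "a = real n - real t" unfolding a_def using tn by simp
  have a2: "a \<ge> s^2/2" using a_eq ns tn_real by simp
  have "s^2 > 0" using sp by simp
  then have ap: "a > 0" using a2 by linarith
  define V where "V = real (ball_vol q n t)"
  define Q where "Q = real q ^ n"
  define N where "N = real (card S)"
  define D where "D = real (max_degree n t S)"
  define W where "W = real (ball_vol q n 4)"
  have V1: "V \<ge> 1" unfolding V_def using ball_vol_pos[of q n t] by simp
  have Qp: "Q > 0" unfolding Q_def using q by simp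
  have H: "hamming_bound q n t = Q / V" unfolding hamming_bound_def Q_def V_def ..
  have NH: "N \<ge> real n ^ 4 * (Q / V)" using NS unfolding N_def H .
  have Sne: "S \<noteq> {}"
  proof
    assume "S = {}"
    then have "N = 0" unfolding N_def by simp
    moreover have "real n ^ 4 * (Q / V) > 0" using n1 Qp V1 by simp
    ultimately show False using NH by simp
  qed
  have mi: "N * V \<le> Q * (1 + W * (2 * real t / a) + D * (20 * real t^3 / a^3))"
    using main_ineq[OF q S Sne tn] unfolding N_def V_def Q_def W_def D_def a_def .
  define R where "R = N * V / Q"
  have R1: "R \<ge> s^8"
  proof -
    have "real n ^ 4 * (Q / V) * V / Q \<le> N * V / Q" using NH V1 Qp by (intro divide_right_mono mult_right_mono) auto
    moreover have "real n ^ 4 * (Q / V) * V / Q = real n ^ 4" using V1 Qp by simp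
    ultimately show ?thesis unfolding R_def ns by (simp add: power_mult[symmetric])
  qed
  have R2: "R \<le> 1 + W * (2 * real t / a) + D * (20 * (real t^3 / a^3))"
    using mi Qp unfolding R_def by (simp add: pos_divide_le_eq mult.commute)
  have W1: "W \<le> 5 * s^8 * real q^4"
    using ball_vol_4[OF n1 q] unfolding W_def ns by (simp add: power_mult[symmetric])
  have x1: "2 * real t / a \<le> 40 / s"
  proof -
    have "2 * real t / a \<le> 2 * (10 * s) / (s^2/2)" using ts' a2 sp ap
      by (intro frac_le) auto
    also have "\<dots> = 40 / s" using sp by (simp add: field_simps power2_eq_square)
    finally show ?thesis .
  qed
  have y1: "real t^3 / a^3 \<le> 8000 / s^3"
  proof -
    have "real t / a = (2 * real t / a) / 2" by simp
    also have "\<dots> \<le> (40 / s) / 2" using x1 by (rule divide_right_mono) simp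
    also have "\<dots> = 20 / s" by simp
    finally have "real t / a \<le> 20 / s" .
    then have "(real t / a)^3 \<le> (20 / s)^3" using ap by (intro power_mono) auto
    then show ?thesis by (simp add: power_divide)
  qed
  have D0: "D \<ge> 0" unfolding D_def by simp
  have fin: "D \<ge> R * s^3 / 320000"
    by (rule final_arith[OF s800 _ s20 R1 R2 _ W1 _ x1 _ y1 D0]) (use q ap in \<open>auto simp: W_def\<close>)
  have p: "real n powr (3/2) = s^3"
  proof -
    have "s^3 = (real n powr (1/2)) powr 3" unfolding s_def using powr_half_sqrt[of "real n"]
      by (simp add: powr_realpow[symmetric] sp[unfolded s_def])
    also have "\<dots> = real n powr (3/2)" by (simp add: powr_powr)
    finally show ?thesis by simp
  qed
  show "1/320000 * (real n powr (3/2) / hamming_bound q n t) * real (card S) \<le> real (max_degree n t S)"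
    using fin unfolding p H R_def N_def[symmetric] D_def[symmetric] by (simp add: field_simps)
qed

end
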